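(* Let $F_1,\dots,F_n\subset\mathbb{R}^d$ be sets of $t$ points each, with elements ordered as $F_j=\{z(j)_1,\dots,z(j)_t\}$, let $k\le t$, and let $(A_1,\dots,A_k)$ be a colourful $k$-partition of them with function representation $(\sigma_1,\dots,\sigma_n)$. Then for real coefficients $\alpha_1,\dots,\alpha_n$, the point $\sum_{j=1}^n\alpha_j x^i_j$ is the same for all $i=1,\dots,k$ if and only if $\sum_{j=1}^n\alpha_j F_j(\sigma_j)=0$.
   Context: A colourful $k$-partition of colour classes $F_1,\dots,F_n$ is a family of $k$ pairwise disjoint sets $A_1,\dots,A_k$ each containing exactly one point of each $F_j$; write $A_i=\{x^i_j: x^i_j\in F_j\}$. Let $\Sigma_{k,t}$ be the set of injective maps $[k]=\{1,\dots,k\}\to[t]$. The function representation of $(A_1,\dots,A_k)$ is $(\sigma_1,\dots,\sigma_n)\in(\Sigma_{k,t})^n$ defined by $\sigma_j(i)=m$ iff $x^i_j=z(j)_m$. Let $u_1,\dots,u_k$ be the vertices of a regular simplex in $\mathbb{R}^{k-1}$ centred at the origin. For $\sigma\in\Sigma_{k,t}$ define $F_j(\sigma)=\sum_{i=1}^k u_i\otimes z(j)_{\sigma(i)}\in\mathbb{R}^{k-1}\otimes\mathbb{R}^d\cong\mathbb{R}^{(k-1)d}$, where $\otimes$ is the tensor product. *)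

theory Defs
  imports "HOL-Analysis.Analysis"
begin

text \<open>Vectors of R^(k-1) are represented as functions nat => real vanishing at
  coordinates l >= k-1.  A regular simplex u_1..u_k in R^(k-1) centred at the origin.\<close>
definition regular_simplex :: "nat \<Rightarrow> (nat \<Rightarrow> nat \<Rightarrow> real) \<Rightarrow> bool" where
  "regular_simplex k u \<longleftrightarrow>
     (\<forall>i\<in>{1..k}. \<forall>l. l \<ge> k - 1 \<longrightarrow> u i l = 0) \<and>
     (\<forall>l. (\<Sum>i=1..k. u i l) = 0) \<and>
     (\<exists>c>0. \<forall>i\<in>{1..k}. \<forall>i'\<in>{1..k}. i \<noteq> i' \<longrightarrow>
              (\<Sum>l<k-1. (u i l - u i' l)^2) = c)"

definition Sigma_kt :: "nat \<Rightarrow> nat \<Rightarrow> (nat \<Rightarrow> nat) set" where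
  "Sigma_kt k t = {\<sigma>. inj_on \<sigma> {1..k} \<and> \<sigma> ` {1..k} \<subseteq> {1..t}}"

definition colour_class :: "(nat \<Rightarrow> nat \<Rightarrow> 'a) \<Rightarrow> nat \<Rightarrow> nat \<Rightarrow> 'a set" where
  "colour_class z t j = z j ` {1..t}"

definition colourful_partition ::
  "(nat \<Rightarrow> nat \<Rightarrow> 'a) \<Rightarrow> nat \<Rightarrow> nat \<Rightarrow> nat \<Rightarrow> (nat \<Rightarrow> 'a set) \<Rightarrow> bool" where
  "colourful_partition z t n k A \<longleftrightarrow>
     (\<forall>i\<in>{1..k}. \<forall>i'\<in>{1..k}. i \<noteq> i' \<longrightarrow> A i \<inter> A i' = {}) \<and>
     (\<forall>i\<in>{1..k}. \<forall>j\<in>{1..n}. card (A i \<inter> colour_class z t j) = 1)"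

definition cpoint :: "(nat \<Rightarrow> nat \<Rightarrow> 'a) \<Rightarrow> nat \<Rightarrow> (nat \<Rightarrow> 'a set) \<Rightarrow> nat \<Rightarrow> nat \<Rightarrow> 'a" where
  "cpoint z t A i j = (THE x. x \<in> A i \<inter> colour_class z t j)"

definition function_representation ::
  "(nat \<Rightarrow> nat \<Rightarrow> 'a) \<Rightarrow> nat \<Rightarrow> nat \<Rightarrow> nat \<Rightarrow> (nat \<Rightarrow> 'a set) \<Rightarrow> (nat \<Rightarrow> nat \<Rightarrow> nat) \<Rightarrow> bool" where
  "function_representation z t n k A \<sigma> \<longleftrightarrow>
     (\<forall>j\<in>{1..n}. \<sigma> j \<in> Sigma_kt k t \<and>
        (\<forall>i\<in>{1..k}. \<forall>m\<in>{1..t}. \<sigma> j i = m \<longleftrightarrow> cpoint z t A i j = z j m))"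

text \<open>R^(k-1) (x) R^d is identified with (R^d)^(k-1) via v (x) w = (v_l *R w)_l.
  F_j(sigma) = sum_i u_i (x) z(j)_{sigma(i)}, given by its coordinates l < k-1.\<close>
definition tensor :: "(nat \<Rightarrow> real) \<Rightarrow> 'a::real_vector \<Rightarrow> nat \<Rightarrow> 'a" where
  "tensor v w = (\<lambda>l. v l *\<^sub>R w)"

definition Fsig :: "nat \<Rightarrow> (nat \<Rightarrow> nat \<Rightarrow> real) \<Rightarrow> (nat \<Rightarrow> nat \<Rightarrow> 'a::real_vector) \<Rightarrow> nat \<Rightarrow> (nat \<Rightarrow> nat) \<Rightarrow> nat \<Rightarrow> 'a" where
  "Fsig k u z j \<sigma> = (\<lambda>l. \<Sum>i=1..k. tensor (u i) (z j (\<sigma> i)) l)"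

end

theory Submission
  imports Defs
begin

lemma key:
  fixes y :: "nat \<Rightarrow> 'a::real_vector"
  assumes rs: "regular_simplex k u"
    and w0: "\<forall>l<k-1. (\<Sum>i=1..k. u i l *\<^sub>R y i) = 0"
    and m: "m \<in> {1..k}" and p: "p \<in> {1..k}"
  shows "y m = y p"
proof (cases "m = p")
  case True then show ?thesis by simp
next
  case False
  from rs obtain c where c: "c > 0" and hd: "\<forall>i\<in>{1..k}. \<forall>i'\<in>{1..k}. i \<noteq> i' \<longrightarrow>
              (\<Sum>l<k-1. (u i l - u i' l)^2) = c" and h0: "\<forall>l. (\<Sum>i=1..k. u i l) = 0"
    unfolding regular_simplex_def by blast
  define K where "K = {1..k}"
  define L where "L = {..<k-1}"
  define N where "N a = (\<Sum>l\<in>L. (u a l)^2)" for a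
  define D where "D a b = (\<Sum>l\<in>L. (u a l - u b l)^2)" for a b
  define P where "P a b = (\<Sum>l\<in>L. u a l * u b l)" for a b
  have PD: "P a b = (N a + N b - D a b) / 2" for a b
  proof -
    have "D a b = (\<Sum>l\<in>L. (u a l)^2 + (u b l)^2 - 2 * (u a l * u b l))"
      unfolding D_def by (rule sum.cong) (auto simp: power2_diff)
    also have "\<dots> = N a + N b - 2 * P a b"
      unfolding N_def P_def by (simp add: sum.distrib sum_subtractf sum_distrib_left)
    finally show ?thesis by simp
  qed
  have DP: "D a b = N a + N b - 2 * P a b" for a b using PD[of a b] by (simp add: field_simps)
  have Dc: "D a b = c" if "a \<in> K" "b \<in> K" "a \<noteq> b" for a b
    using hd that unfolding D_def K_def L_def by blast
  have Dz: "D a a = 0" for a unfolding D_def by simp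
  have fin: "finite K" unfolding K_def by simp
  have cardK: "card K = k" unfolding K_def by simp
  have sumD: "(\<Sum>i\<in>K. D a i) = (real k - 1) * c" if a: "a \<in> K" for a
  proof -
    have "(\<Sum>i\<in>K. D a i) = D a a + (\<Sum>i\<in>K-{a}. D a i)"
      using fin a by (simp add: sum.remove)
    also have "\<dots> = (\<Sum>i\<in>K-{a}. c)" using Dc a by (simp add: Dz)
    also have "\<dots> = (real k - 1) * c"
    proof -
      have "k \<ge> 1" using a cardK fin by (metis card_0_eq empty_iff less_one not_le)
      thus ?thesis using fin a cardK by (simp add: card_Diff_singleton of_nat_diff)
    qed
    finally show ?thesis .
  qed
  have sumP: "(\<Sum>i\<in>K. P a i) = 0" for a
  proof -
    have "(\<Sum>i\<in>K. P a i) = (\<Sum>l\<in>L. u a l * (\<Sum>i\<in>K. u i l))"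
      unfolding P_def by (simp add: sum_distrib_left sum.swap[of _ K])
    also have "\<dots> = 0" using h0 unfolding K_def by simp
    finally show ?thesis .
  qed
  have sumD2: "(\<Sum>i\<in>K. D a i) = real k * N a + (\<Sum>i\<in>K. N i)" for a
  proof -
    have "(\<Sum>i\<in>K. D a i) = (\<Sum>i\<in>K. N a + N i - 2 * P a i)"
      by (rule sum.cong[OF refl]) (rule DP)
    also have "\<dots> = real k * N a + (\<Sum>i\<in>K. N i) - 2 * (\<Sum>i\<in>K. P a i)"
      by (simp add: sum.distrib sum_subtractf sum_distrib_left cardK)
    finally show ?thesis using sumP by simp
  qed
  have kpos: "real k > 0" using m by simp
  have Neq: "N m = N p"
  proof -
    have "real k * N m = real k * N p"
      using sumD[of m] sumD[of p] sumD2[of m] sumD2[of p] m p unfolding K_def by linarith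
    thus ?thesis using kpos by simp
  qed
  have "(\<Sum>l\<in>L. (u m l - u p l) *\<^sub>R (\<Sum>i\<in>K. u i l *\<^sub>R y i)) = 0"
    using w0 unfolding L_def K_def by simp
  moreover have "(\<Sum>l\<in>L. (u m l - u p l) *\<^sub>R (\<Sum>i\<in>K. u i l *\<^sub>R y i))
      = (\<Sum>i\<in>K. (P m i - P p i) *\<^sub>R y i)"
    unfolding P_def
    by (simp add: scaleR_sum_right sum.swap[of _ L] scaleR_sum_left sum_subtractf[symmetric]
        algebra_simps)
  moreover have "(\<Sum>i\<in>K. (P m i - P p i) *\<^sub>R y i) = (c/2) *\<^sub>R (y m - y p)"
  proof -
    have f: "P m i - P p i = (D p i - D m i) / 2" for i using PD Neq by (simp add: field_simps)
    have "(\<Sum>i\<in>K. (P m i - P p i) *\<^sub>R y i) =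
        (P m m - P p m) *\<^sub>R y m + ((P m p - P p p) *\<^sub>R y p + (\<Sum>i\<in>K-{m}-{p}. (P m i - P p i) *\<^sub>R y i))"
      using fin m p False unfolding K_def
      by (simp add: sum.remove[of _ m] sum.remove[of _ p])
    also have "(\<Sum>i\<in>K-{m}-{p}. (P m i - P p i) *\<^sub>R y i) = 0"
    proof (rule sum.neutral, rule ballI)
      fix i assume i: "i \<in> K-{m}-{p}"
      have "D p i = c" "D m i = c" using Dc[of p i] Dc[of m i] i m p K_def by auto
      thus "(P m i - P p i) *\<^sub>R y i = 0" by (simp add: f)
    qed
    also have "P m m - P p m = c/2" using f Dc[of p m] Dz m p False K_def by simp
    also have "P m p - P p p = - (c/2)"
    proof -
      have "D m p = c" using Dc[of m p] m p False K_def by simp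
      thus ?thesis using f[of p] Dz[of p] by simp
    qed
    finally show ?thesis by (simp add: algebra_simps)
  qed
  ultimately have "(c/2) *\<^sub>R (y m - y p) = 0" by simp
  thus ?thesis using c by simp
qed


theorem lemma1:
  fixes z :: "nat \<Rightarrow> nat \<Rightarrow> real^'d" and n t k :: nat
    and u :: "nat \<Rightarrow> nat \<Rightarrow> real"
    and A :: "nat \<Rightarrow> (real^'d) set" and \<sigma> :: "nat \<Rightarrow> nat \<Rightarrow> nat"
    and \<alpha> :: "nat \<Rightarrow> real"
  assumes "\<forall>j\<in>{1..n}. inj_on (z j) {1..t}"
    and "k \<le> t"
    and "regular_simplex k u"
    and "colourful_partition z t n k A"
    and "function_representation z t n k A \<sigma>"
  shows "(\<forall>i\<in>{1..k}. \<forall>i'\<in>{1..k}.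
            (\<Sum>j=1..n. \<alpha> j *\<^sub>R cpoint z t A i j) = (\<Sum>j=1..n. \<alpha> j *\<^sub>R cpoint z t A i' j))
         \<longleftrightarrow> (\<forall>l<k-1. (\<Sum>j=1..n. \<alpha> j *\<^sub>R Fsig k u z j (\<sigma> j) l) = 0)"
proof -
  have xe: "cpoint z t A i j = z j (\<sigma> j i)" if "i \<in> {1..k}" "j \<in> {1..n}" for i j
  proof -
    have "\<sigma> j \<in> Sigma_kt k t" using assms(5) that unfolding function_representation_def by blast
    hence "\<sigma> j i \<in> {1..t}" using that unfolding Sigma_kt_def by blast
    thus ?thesis using assms(5) that unfolding function_representation_def by blast
  qed
  define y where "y i = (\<Sum>j=1..n. \<alpha> j *\<^sub>R cpoint z t A i j)" for i
  have F: "(\<Sum>j=1..n. \<alpha> j *\<^sub>R Fsig k u z j (\<sigma> j) l) = (\<Sum>i=1..k. u i l *\<^sub>R y i)" for l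
  proof -
    have "(\<Sum>j=1..n. \<alpha> j *\<^sub>R Fsig k u z j (\<sigma> j) l) = (\<Sum>j=1..n. \<Sum>i=1..k. u i l *\<^sub>R (\<alpha> j *\<^sub>R cpoint z t A i j))"
      unfolding Fsig_def tensor_def
    proof (rule sum.cong[OF refl])
      fix j assume j: "j \<in> {1..n}"
      have "(\<Sum>i=1..k. u i l *\<^sub>R z j (\<sigma> j i)) = (\<Sum>i=1..k. u i l *\<^sub>R cpoint z t A i j)"
        by (rule sum.cong[OF refl]) (use xe j in auto)
      hence "\<alpha> j *\<^sub>R (\<Sum>i=1..k. u i l *\<^sub>R z j (\<sigma> j i)) = \<alpha> j *\<^sub>R (\<Sum>i=1..k. u i l *\<^sub>R cpoint z t A i j)"
        by (rule arg_cong)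
      also have "\<dots> = (\<Sum>i=1..k. \<alpha> j *\<^sub>R (u i l *\<^sub>R cpoint z t A i j))"
        by (rule scaleR_sum_right)
      also have "\<dots> = (\<Sum>i=1..k. u i l *\<^sub>R (\<alpha> j *\<^sub>R cpoint z t A i j))"
        by (rule sum.cong[OF refl], rule scaleR_left_commute)
      finally show "\<alpha> j *\<^sub>R (\<Sum>i=1..k. u i l *\<^sub>R z j (\<sigma> j i)) = (\<Sum>i=1..k. u i l *\<^sub>R (\<alpha> j *\<^sub>R cpoint z t A i j))" .
    qed
    also have "\<dots> = (\<Sum>i=1..k. u i l *\<^sub>R y i)"
      unfolding y_def scaleR_sum_right by (rule sum.swap)
    finally show ?thesis .
  qed
  have h0: "\<forall>l. (\<Sum>i=1..k. u i l) = 0" using assms(3) unfolding regular_simplex_def by blast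
  show ?thesis
  proof
    assume H: "\<forall>i\<in>{1..k}. \<forall>i'\<in>{1..k}. (\<Sum>j=1..n. \<alpha> j *\<^sub>R cpoint z t A i j) = (\<Sum>j=1..n. \<alpha> j *\<^sub>R cpoint z t A i' j)"
    show "\<forall>l<k-1. (\<Sum>j=1..n. \<alpha> j *\<^sub>R Fsig k u z j (\<sigma> j) l) = 0"
    proof (intro allI impI)
      fix l assume "l < k - 1"
      hence k1: "1 \<in> {1..k}" by auto
      have "(\<Sum>i=1..k. u i l *\<^sub>R y i) = (\<Sum>i=1..k. u i l *\<^sub>R y 1)"
      proof (rule sum.cong[OF refl])
        fix i assume "i \<in> {1..k}"
        hence "y i = y 1" using H k1 unfolding y_def by blast
        thus "u i l *\<^sub>R y i = u i l *\<^sub>R y 1" by simp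
      qed
      also have "\<dots> = 0" using h0 by (simp add: scaleR_sum_left[symmetric])
      finally show "(\<Sum>j=1..n. \<alpha> j *\<^sub>R Fsig k u z j (\<sigma> j) l) = 0" using F by simp
    qed
  next
    assume "\<forall>l<k-1. (\<Sum>j=1..n. \<alpha> j *\<^sub>R Fsig k u z j (\<sigma> j) l) = 0"
    hence "\<forall>l<k-1. (\<Sum>i=1..k. u i l *\<^sub>R y i) = 0" using F by simp
    show "\<forall>i\<in>{1..k}. \<forall>i'\<in>{1..k}. (\<Sum>j=1..n. \<alpha> j *\<^sub>R cpoint z t A i j) = (\<Sum>j=1..n. \<alpha> j *\<^sub>R cpoint z t A i' j)"
    proof (intro ballI)
      fix i i' assume "i \<in> {1..k}" "i' \<in> {1..k}"
      hence "y i = y i'" using key[OF assms(3) \<open>\<forall>l<k-1. (\<Sum>i=1..k. u i l *\<^sub>R y i) = 0\<close>] by blast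
      thus "(\<Sum>j=1..n. \<alpha> j *\<^sub>R cpoint z t A i j) = (\<Sum>j=1..n. \<alpha> j *\<^sub>R cpoint z t A i' j)"
        unfolding y_def .
    qed
  qed
qed

end
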